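(* Let $K$ be a formally real field and let $s>1$ be an integer. Let $g\in K[x,y]$ be a polynomial of $2s$-length $k$ (with $k$ a positive integer), and let $r$ be a positive integer such that $\deg_x g<2sr$. Then the polynomial $$G(x,y):=g(x,y)\,(y-x^r)^{2s}+1$$ has $2s$-length exactly $k+1$ in $K[x,y]$.
   Context: For a commutative ring $A$ with identity, a positive integer $m$ and $a\in A$, the $m$-length of $a$ is the smallest positive integer $\ell$ such that $a$ can be written as a sum of $\ell$ $m$-th powers of elements of $A$. A field is formally real if $-1$ is not a sum of squares in it. *)

theory Defs
  imports "HOL-Computational_Algebra.Polynomial"
begin

definition formally_real :: "'a::field itself \<Rightarrow> bool" where
  "formally_real _ \<longleftrightarrow> (\<forall>xs::'a list. sum_list (map (\<lambda>x. x ^ 2) xs) \<noteq> - 1)"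

definition sum_of_powers :: "nat \<Rightarrow> nat \<Rightarrow> 'a::comm_ring_1 \<Rightarrow> bool" where
  "sum_of_powers m l a \<longleftrightarrow> (\<exists>xs::'a list. length xs = l \<and> a = sum_list (map (\<lambda>x. x ^ m) xs))"

definition has_m_length :: "nat \<Rightarrow> 'a::comm_ring_1 \<Rightarrow> nat \<Rightarrow> bool" where
  "has_m_length m a k \<longleftrightarrow> 0 < k \<and> sum_of_powers m k a \<and> (\<forall>l. 0 < l \<and> l < k \<longrightarrow> \<not> sum_of_powers m l a)"

text \<open>Bivariate polynomials K[x,y] are represented as K[x][y]: type 'a poly poly,
  where the inner polynomials are in x and the outer variable is y.\<close>
definition var_x :: "'a::comm_ring_1 poly poly" where
  "var_x = [: [:0, 1:] :]"

definition var_y :: "'a::comm_ring_1 poly poly" where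
  "var_y = [: 0, 1 :]"

definition deg_x :: "'a::zero poly poly \<Rightarrow> nat" where
  "deg_x g = Max ((\<lambda>i. degree (coeff g i)) ` {..degree g})"

end

theory Submission
  imports Defs
begin


lemma sumsq_div: "sum_list (map (\<lambda>y. (y/x)^2) zs) = sum_list (map (\<lambda>y. y^2) zs) / (x::'a::field)^2"
  by (induct zs) (simp_all add: power_divide add_divide_distrib)

lemma fr_sumsq_zero:
  assumes fr: "formally_real TYPE('a::field)"
    and s: "sum_list (map (\<lambda>x. x^2) xs) = (0::'a)" and x: "x \<in> set xs"
  shows "x = 0"
proof (rule ccontr)
  assume nz: "x \<noteq> 0"
  have "sum_list (map (\<lambda>x. x^2) xs) = x^2 + sum_list (map (\<lambda>x. x^2) (remove1 x xs))"
    using x by (rule sum_list_map_remove1)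
  with s have e: "sum_list (map (\<lambda>x. x^2) (remove1 x xs)) = -(x^2)" by (simp add: eq_neg_iff_add_eq_0 add.commute)
  have "sum_list (map (\<lambda>y. y^2) (map (\<lambda>y. y/x) (remove1 x xs))) = -1"
    using e nz by (simp add: o_def sumsq_div)
  with fr show False unfolding formally_real_def by blast
qed

lemma sumsq_repl: "sum_list (map (\<lambda>x. x^2) (replicate n (1::'a::comm_ring_1))) = of_nat n"
  by (induct n) simp_all

lemma fr_of_nat:
  assumes fr: "formally_real TYPE('a::field)" and n: "n > 0"
  shows "(of_nat n :: 'a) \<noteq> 0"
proof
  assume "(of_nat n :: 'a) = 0"
  then have "sum_list (map (\<lambda>x. x^2) (replicate n (1::'a))) = 0" by (simp only: sumsq_repl)
  from fr_sumsq_zero[OF fr this] n show False by simp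
qed

lemma fr_of_nat_inj:
  assumes fr: "formally_real TYPE('a::field)" and e: "(of_nat m :: 'a) = of_nat n"
  shows "m = n"
proof (rule ccontr)
  assume "m \<noteq> n"
  then consider "m < n" | "n < m" by linarith
  then show False
  proof cases
    case 1
    then have "(of_nat n :: 'a) = of_nat m + of_nat (n - m)" by (simp flip: of_nat_add)
    with e have "(of_nat (n - m) :: 'a) = 0" by (metis add_cancel_left_right)
    with fr_of_nat[OF fr, of "n-m"] 1 show False by simp
  next
    case 2
    then have "(of_nat m :: 'a) = of_nat n + of_nat (m - n)" by (simp flip: of_nat_add)
    with e have "(of_nat (m - n) :: 'a) = 0" by (metis add_cancel_left_right)
    with fr_of_nat[OF fr, of "m-n"] 2 show False by simp
  qed
qed

lemma coeff_sum_list: "coeff (sum_list xs) n = sum_list (map (\<lambda>p. coeff p n) xs)"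
  by (induct xs) simp_all

lemma U:
  fixes ps :: "'a::field poly list"
  assumes fr: "formally_real TYPE('a)" and p0: "p0 \<in> set ps" "p0 \<noteq> 0"
  shows "sum_list (map (\<lambda>p. p^2) ps) \<noteq> 0 \<and> (\<forall>p\<in>set ps. 2 * degree p \<le> degree (sum_list (map (\<lambda>p. p^2) ps)))"
proof -
  define D where "D = Max (degree ` set ps)"
  have fin: "finite (degree ` set ps)" by simp
  have le: "degree p \<le> D" if "p \<in> set ps" for p
    using that fin unfolding D_def by auto
  obtain p1 where p1: "p1 \<in> set ps" "p1 \<noteq> 0" "degree p1 = D"
  proof (cases "D = 0")
    case True
    then show ?thesis using that p0 le[OF p0(1)] by auto
  next
    case False
    have "D \<in> degree ` set ps" unfolding D_def using p0(1) fin by (intro Max_in) auto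
    then obtain p where "p \<in> set ps" "degree p = D" by auto
    with False show ?thesis using that by fastforce
  qed
  define Q where "Q = sum_list (map (\<lambda>p. p^2) ps)"
  have cp: "coeff (p^2) (2*D) = (if degree p = D then lead_coeff p else 0)^2" if "p \<in> set ps" for p
  proof (cases "degree p = D")
    case True
    then show ?thesis using coeff_mult_degree_sum[of p p] by (simp add: power2_eq_square mult_2)
  next
    case False
    with le[OF that] have "degree p < D" by simp
    moreover have "degree (p^2) \<le> 2 * degree p" using degree_power_le[of p 2] by (simp add: mult.commute)
    ultimately have "coeff (p^2) (2*D) = 0" by (intro coeff_eq_0) simp
    then show ?thesis using False by simp
  qed
  have "coeff Q (2*D) = sum_list (map (\<lambda>p. coeff (p^2) (2*D)) ps)"
    unfolding Q_def by (simp add: coeff_sum_list o_def)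
  also have "\<dots> = sum_list (map (\<lambda>x. x^2) (map (\<lambda>p. if degree p = D then lead_coeff p else 0) ps))"
    using cp by (simp add: o_def cong: map_cong)
  finally have cQ: "coeff Q (2*D) = \<dots>" .
  have "coeff Q (2*D) \<noteq> 0"
  proof
    assume "coeff Q (2*D) = 0"
    with cQ have "sum_list (map (\<lambda>x. x^2) (map (\<lambda>p. if degree p = D then lead_coeff p else 0) ps)) = 0" by simp
    from fr_sumsq_zero[OF fr this, of "lead_coeff p1"] p1 show False by auto
  qed
  then have "Q \<noteq> 0" "2 * D \<le> degree Q" by (auto intro: le_degree)
  then show ?thesis using le unfolding Q_def by fastforce
qed



definition dxle :: "'a::zero poly poly \<Rightarrow> nat \<Rightarrow> bool" where
  "dxle h N \<longleftrightarrow> (\<forall>b. degree (coeff h b) \<le> N)"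

lemma dxle_mono: "dxle p A \<Longrightarrow> A \<le> B \<Longrightarrow> dxle p B"
  unfolding dxle_def using order_trans by blast

lemma dxle_add: "dxle p A \<Longrightarrow> dxle q A \<Longrightarrow> dxle (p + q) A"
  unfolding dxle_def by (auto intro: degree_add_le)

lemma dxle_diff: "dxle p A \<Longrightarrow> dxle q A \<Longrightarrow> dxle (p - q :: 'a::comm_ring poly poly) A"
  unfolding dxle_def by (auto intro: degree_diff_le)

lemma dxle_smult: "dxle q B \<Longrightarrow> dxle (smult a q :: 'a::comm_semiring_0 poly poly) (degree a + B)"
  unfolding dxle_def by (auto intro: order_trans[OF degree_mult_le])

lemma dxle_pCons0: "dxle (pCons 0 p) A \<longleftrightarrow> dxle p A"
  unfolding dxle_def by (auto simp: coeff_pCons split: nat.splits)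

lemma dxle_pCons: "dxle (pCons a p) A \<Longrightarrow> degree a \<le> A \<and> dxle p A"
  unfolding dxle_def by (metis coeff_pCons_0 coeff_pCons_Suc)

lemma dxle_0: "dxle 0 A"
  unfolding dxle_def by simp

lemma dxle_mult: "dxle p A \<Longrightarrow> dxle q B \<Longrightarrow> dxle (p * q :: 'a::comm_semiring_0 poly poly) (A + B)"
proof (induct p rule: pCons_induct)
  case 0
  then show ?case by (simp add: dxle_0)
next
  case (pCons a p)
  from dxle_pCons[OF pCons(3)] have a: "degree a \<le> A" and p: "dxle p A" by auto
  have "dxle (smult a q) (A + B)"
    using dxle_mono[OF dxle_smult[OF pCons(4), of a]] a by simp
  moreover have "dxle (pCons 0 (p * q)) (A + B)"
    using pCons(2)[OF p pCons(4)] by (simp add: dxle_pCons0)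
  ultimately show ?case by (simp add: dxle_add)
qed

lemma dxle_1: "dxle 1 0"
  unfolding dxle_def by (simp add: coeff_1)

lemma dxle_power: "dxle p A \<Longrightarrow> dxle (p ^ n :: 'a::comm_semiring_1 poly poly) (n * A)"
  by (induct n) (simp_all add: dxle_1 dxle_mult)

lemma dxle_const: "dxle [:a:] (degree a)"
  unfolding dxle_def by (simp add: coeff_pCons split: nat.splits)

lemma dxle_sum: "(\<And>i. i < (l::nat) \<Longrightarrow> dxle (f i) A) \<Longrightarrow> dxle (\<Sum>i<l. f i) A"
  by (induct l) (simp_all add: dxle_0 dxle_add)

lemma var_x_pow: "(var_x :: 'a::comm_ring_1 poly poly) ^ r = [:monom 1 r:]"
proof -
  have "[:0, 1:] = (monom 1 1 :: 'a poly)" by (simp add: monom_Suc monom_0)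
  then show ?thesis unfolding var_x_def by (simp add: poly_const_pow monom_power)
qed

lemma dxle_t: "dxle (var_y - var_x ^ r :: 'a::comm_ring_1 poly poly) r"
proof -
  have "dxle (var_y :: 'a poly poly) r" unfolding dxle_def var_y_def
    by (simp add: coeff_pCons split: nat.splits)
  moreover have "dxle (var_x ^ r :: 'a poly poly) r"
    unfolding var_x_pow using dxle_const[of "monom (1::'a) r"] by (simp add: degree_monom_eq)
  ultimately show ?thesis by (rule dxle_diff)
qed

lemma E_t: "poly (var_y - var_x ^ r :: 'a::comm_ring_1 poly poly) (monom 1 r) = 0"
  by (simp add: var_x_pow var_y_def)

lemma dxle_degx: "dxle g (deg_x g)"
  unfolding dxle_def deg_x_def
proof
  fix b
  show "degree (coeff g b) \<le> Max ((\<lambda>i. degree (coeff g i)) ` {..degree g})"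
  proof (cases "b \<le> degree g")
    case True
    then show ?thesis by (intro Max_ge) auto
  next
    case False
    then show ?thesis by (simp add: coeff_eq_0)
  qed
qed

lemma claimA_coeff:
  fixes h :: "'a::comm_ring_1 poly poly"
  assumes "dxle h (r - 1)" "r > 0" "m < r"
  shows "coeff (poly h (monom 1 r)) (r * b + m) = coeff (coeff h b) m"
  using assms(1)
proof (induct h arbitrary: b rule: pCons_induct)
  case 0
  then show ?case by simp
next
  case (pCons a h)
  from dxle_pCons[OF pCons(3)] have a: "degree a \<le> r - 1" and h: "dxle h (r - 1)" by auto
  show ?case
  proof (cases b)
    case 0
    then show ?thesis using assms by (simp add: coeff_monom_mult)
  next
    case (Suc b')
    have "r \<le> r * b" using Suc by simp
    then have "coeff a (r * b + m) = 0" using a assms by (intro coeff_eq_0) linarith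
    moreover have "r * b + m - r = r * b' + m" using Suc by simp
    ultimately show ?thesis using Suc pCons(2)[OF h, of b'] assms
      by (simp add: coeff_monom_mult)
  qed
qed

lemma claimA:
  fixes h :: "'a::comm_ring_1 poly poly"
  assumes "dxle h (r - 1)" "r > 0" "poly h (monom 1 r) = 0"
  shows "h = 0"
proof (rule poly_eqI)
  fix b
  show "coeff h b = coeff 0 b"
  proof (simp, rule poly_eqI)
    fix m
    show "coeff (coeff h b) m = coeff 0 m"
    proof (cases "m < r")
      case True
      then show ?thesis using claimA_coeff[OF assms(1,2) True, of b] assms(3) by simp
    next
      case False
      then show ?thesis using assms(1) unfolding dxle_def
        by (metis coeff_0 coeff_eq_0 diff_less le_less_trans not_le_imp_less zero_less_one assms(2) le_trans)
    qed
  qed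
qed



lemma claimB:
  fixes f :: "'a::field poly poly"
  assumes df: "dxle f (2 * r - 1)" and r: "r > 0" and E: "poly f (monom 1 r) = [:c:]"
  shows "\<exists>p. dxle p (r - 1) \<and> f = [:[:c:]:] - (var_y - var_x ^ r) * p"
proof -
  define m :: "'a poly" where "m = monom 1 r"
  have m0: "m \<noteq> 0" and dm: "degree m = r" unfolding m_def by (simp_all add: degree_monom_eq)
  define flo where "flo = map_poly (\<lambda>a. a mod m) f"
  define fhi where "fhi = map_poly (\<lambda>a. a div m) f"
  have cflo: "coeff flo b = coeff f b mod m" for b unfolding flo_def by (simp add: coeff_map_poly)
  have cfhi: "coeff fhi b = coeff f b div m" for b unfolding fhi_def by (simp add: coeff_map_poly)
  have fsplit: "f = flo + smult m fhi"
    by (rule poly_eqI) (simp add: cflo cfhi mod_mult_div_eq)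
  have dlo: "dxle flo (r - 1)" unfolding dxle_def
  proof
    fix b
    show "degree (coeff flo b) \<le> r - 1"
    proof (cases "coeff f b mod m = 0")
      case True then show ?thesis by (simp add: cflo)
    next
      case False
      then have "degree (coeff f b mod m) < r" using degree_mod_less'[OF m0] dm by simp
      then show ?thesis by (simp add: cflo)
    qed
  qed
  have dhi: "dxle fhi (r - 1)" unfolding dxle_def
  proof
    fix b
    let ?a = "coeff f b"
    show "degree (coeff fhi b) \<le> r - 1"
    proof (cases "?a div m = 0")
      case True then show ?thesis by (simp add: cfhi)
    next
      case False
      have e: "m * (?a div m) = ?a - ?a mod m" using mod_mult_div_eq[of ?a m] by (simp add: algebra_simps)
      have "degree ?a \<le> 2 * r - 1" using df unfolding dxle_def by simp
      moreover have "degree (?a mod m) \<le> 2 * r - 1"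
      proof (cases "?a mod m = 0")
        case True then show ?thesis by simp
      next
        case False
        then have "degree (?a mod m) < r" using degree_mod_less'[OF m0] dm by simp
        then show ?thesis by simp
      qed
      ultimately have "degree (m * (?a div m)) \<le> 2 * r - 1" unfolding e by (intro degree_diff_le)
      then have "r + degree (?a div m) \<le> 2 * r - 1" using degree_mult_eq[OF m0 False] dm by simp
      then show ?thesis by (simp add: cfhi)
    qed
  qed
  define t :: "'a poly poly" where "t = var_y - var_x ^ r"
  have tf: "t * fhi = pCons 0 fhi - smult m fhi"
    unfolding t_def var_x_pow var_y_def m_def by (simp add: algebra_simps)
  define q where "q = flo + pCons 0 fhi"
  have fq: "f = q - t * fhi" unfolding q_def tf using fsplit by simp
  have dq: "dxle q (r - 1)" unfolding q_def using dlo dhi by (simp add: dxle_add dxle_pCons0)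
  have Eq: "poly q (monom 1 r) = [:c:]"
  proof -
    have "poly t (monom 1 r) = 0" unfolding t_def by (rule E_t)
    then show ?thesis using E fq by simp
  qed
  have "dxle (q - [:[:c:]:]) (r - 1)"
    by (rule dxle_diff[OF dq]) (rule dxle_mono[OF dxle_const], simp)
  moreover have "poly (q - [:[:c:]:]) (monom 1 r) = 0" using Eq by simp
  ultimately have "q - [:[:c:]:] = 0" using claimA r by blast
  then have "f = [:[:c:]:] - t * fhi" using fq by simp
  then show ?thesis using dhi unfolding t_def by blast
qed

lemma L1: "coeff (poly f [:z:]) M = poly (map_poly (\<lambda>a. coeff a M) f) (z::'a::comm_ring_1)"
  by (induct f rule: pCons_induct) (simp_all add: map_poly_pCons)

lemma L2: "dxle h N \<Longrightarrow> degree (poly h [:z:]) \<le> N"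
proof (induct h rule: pCons_induct)
  case 0 then show ?case by simp
next
  case (pCons a h)
  from dxle_pCons[OF pCons(3)] have "degree a \<le> N" "dxle h N" by auto
  with pCons(2) have "degree (a + smult z (poly h [:z:])) \<le> N"
    by (intro degree_add_le) (auto intro: order_trans[OF degree_smult_le])
  then show ?case by simp
qed

lemma L3:
  assumes fr: "formally_real TYPE('a::field)" and P: "(P :: 'a poly) \<noteq> 0"
  shows "\<exists>z. poly P z \<noteq> 0"
proof (rule ccontr)
  assume "\<not> ?thesis"
  then have "range (of_nat :: nat \<Rightarrow> 'a) \<subseteq> {x. poly P x = 0}" by auto
  moreover have "inj (of_nat :: nat \<Rightarrow> 'a)" by (rule injI) (rule fr_of_nat_inj[OF fr])
  then have "infinite (range (of_nat :: nat \<Rightarrow> 'a))" by (rule range_inj_infinite)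
  ultimately show False using poly_roots_finite[OF P] finite_subset by blast
qed

lemma poly_sum_list_map: "poly (sum_list (map h fs)) z = sum_list (map (\<lambda>f. poly (h f) z) fs)"
  by (induct fs) simp_all

lemma dx_bound:
  fixes fs :: "'a::field poly poly list"
  assumes fr: "formally_real TYPE('a)" and f: "f \<in> set fs" and s: "s > 0"
    and dG: "dxle (sum_list (map (\<lambda>f. f ^ (2 * s)) fs)) N"
  shows "2 * s * degree (coeff f b) \<le> N"
proof (cases "coeff f b = 0")
  case True then show ?thesis by simp
next
  case False
  define M where "M = degree (coeff f b)"
  define P where "P = map_poly (\<lambda>a. coeff a M) f"
  have "coeff P b = lead_coeff (coeff f b)" unfolding P_def M_def by (simp add: coeff_map_poly)
  with False have "P \<noteq> 0" by auto
  then obtain z where z: "poly P z \<noteq> 0" using L3[OF fr] by blast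
  define pf where "pf = poly f [:z:]"
  have "coeff pf M \<noteq> 0" unfolding pf_def L1 using z P_def by simp
  then have pf0: "pf \<noteq> 0" and Mle: "M \<le> degree pf" by (auto intro: le_degree)
  have "poly (sum_list (map (\<lambda>f. f ^ (2 * s)) fs)) [:z:]
     = sum_list (map (\<lambda>p. p^2) (map (\<lambda>f. (poly f [:z:]) ^ s) fs))"
    by (simp add: poly_sum_list_map o_def power_mult mult.commute[of 2 s])
  moreover have "degree (poly (sum_list (map (\<lambda>f. f ^ (2 * s)) fs)) [:z:]) \<le> N" by (rule L2[OF dG])
  moreover have "pf ^ s \<in> set (map (\<lambda>f. (poly f [:z:]) ^ s) fs)" "pf ^ s \<noteq> 0"
    using f pf0 unfolding pf_def by auto
  ultimately have "2 * degree (pf ^ s) \<le> N" using U[OF fr] by fastforce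
  then have "2 * (s * degree pf) \<le> N" using degree_power_eq[OF pf0] by simp
  moreover have "2 * s * M \<le> 2 * (s * degree pf)" using Mle by simp
  ultimately show ?thesis unfolding M_def by linarith
qed



lemma expand:
  "\<exists>q>0. \<forall>(a::'b::comm_ring_1) b. \<exists>R. (a+b)^(m+2) = a^(m+2) + of_nat (m+2) * a^(m+1) * b + of_nat q * a^m * b^2 + b^3 * R"
proof (induct m)
  case 0
  show ?case by (rule exI[of _ 1]) (auto simp: power2_eq_square algebra_simps intro: exI[of _ 0])
next
  case (Suc m)
  then obtain q where q: "q > 0" and H: "\<And>a b::'b. \<exists>R. (a+b)^(m+2) = a^(m+2) + of_nat (m+2) * a^(m+1) * b + of_nat q * a^m * b^2 + b^3 * R"
    by blast
  show ?case
  proof (intro exI[of _ "q + (m + 2)"] conjI allI)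
    show "q + (m + 2) > 0" by simp
    fix a b :: 'b
    obtain R where R: "(a+b)^(m+2) = a^(m+2) + of_nat (m+2) * a^(m+1) * b + of_nat q * a^m * b^2 + b^3 * R"
      using H by blast
    have "(a+b)^(Suc m+2) = (a+b) * (a+b)^(m+2)" by simp
    also have "\<dots> = a^(Suc m+2) + of_nat (Suc m+2) * a^(Suc m+1) * b + of_nat (q + (m+2)) * a^(Suc m) * b^2
        + b^3 * (a * R + of_nat q * a^m + b * R)"
      unfolding R by (simp add: algebra_simps power2_eq_square power3_eq_cube)
    finally show "\<exists>R. (a+b)^(Suc m+2) = a^(Suc m+2) + of_nat (Suc m+2) * a^(Suc m+1) * b + of_nat (q + (m+2)) * a^(Suc m) * b^2 + b^3 * R"
      by blast
  qed
qed



lemma sum_list_map_nth: "sum_list (map f xs) = (\<Sum>i<length xs. f (xs ! i))"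
  by (simp add: sum_list_sum_nth atLeast0LessThan)

lemma sum_const_poly: "(\<Sum>i<(l::nat). [:f i:]) = [:\<Sum>i<l. f i:]"
  by (induct l) simp_all

lemma sum_list_mult_pow: "sum_list (map (\<lambda>h. (h * t) ^ n) hs) = sum_list (map (\<lambda>h. h ^ n) hs) * (t::'b::comm_ring_1) ^ n"
  by (induct hs) (simp_all add: power_mult_distrib algebra_simps)

theorem mainTheorem1:
  fixes g :: "'a::field poly poly" and s k r :: nat
  assumes "formally_real TYPE('a)"
    and "s > 1"
    and "g \<noteq> 0"
    and "k > 0"
    and "has_m_length (2 * s) g k"
    and "r > 0"
    and "deg_x g < 2 * s * r"
  shows "has_m_length (2 * s) (g * (var_y - var_x ^ r) ^ (2 * s) + 1) (k + 1)"
proof -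
  note fr = assms(1)
  define n where "n = 2 * s"
  define t :: "'a poly poly" where "t = var_y - var_x ^ r"
  define G where "G = g * t ^ n + 1"
  have Et: "poly t (monom 1 r) = 0" unfolding t_def by (rule E_t)
  have t0: "t \<noteq> 0" using Et
  proof -
    have "coeff t 1 = 1" unfolding t_def var_y_def var_x_pow by simp
    then show ?thesis by auto
  qed
  from assms(5) have hk: "sum_of_powers n k g" and minl: "\<And>l. 0 < l \<Longrightarrow> l < k \<Longrightarrow> \<not> sum_of_powers n l g"
    unfolding has_m_length_def n_def by auto
  have up: "sum_of_powers n (k + 1) G"
  proof -
    from hk obtain hs where hs: "length hs = k" "g = sum_list (map (\<lambda>x. x ^ n) hs)"
      unfolding sum_of_powers_def by blast
    let ?xs = "map (\<lambda>h. h * t) hs @ [1]"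
    have "sum_list (map (\<lambda>x. x ^ n) ?xs) = G"
      unfolding G_def hs(2) by (simp add: o_def sum_list_mult_pow)
    then show ?thesis unfolding sum_of_powers_def using hs(1) by (intro exI[of _ ?xs]) auto
  qed
  have low: "\<not> sum_of_powers n l G" if l: "0 < l" "l < k + 1" for l
  proof
    assume "sum_of_powers n l G"
    then obtain fs where fs: "length fs = l" "G = sum_list (map (\<lambda>x. x ^ n) fs)"
      unfolding sum_of_powers_def by blast
    have s0: "s > 0" using assms(2) by simp
    have "dxle (g * t ^ n) (deg_x g + n * r)"
      unfolding t_def by (rule dxle_mult[OF dxle_degx dxle_power[OF dxle_t[of r]]])
    moreover have "dxle 1 (deg_x g + n * r)" by (rule dxle_mono[OF dxle_1]) simp
    ultimately have dG: "dxle G (deg_x g + n * r)"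
      unfolding G_def by (rule dxle_add)
    have df: "dxle f (2 * r - 1)" if f: "f \<in> set fs" for f
      unfolding dxle_def
    proof
      fix b
      have "2 * s * degree (coeff f b) \<le> deg_x g + n * r"
        by (rule dx_bound[OF fr f s0]) (use dG fs(2) n_def in simp)
      then have "2 * s * degree (coeff f b) < 2 * s * r + 2 * s * r" using assms(7) unfolding n_def by linarith
      also have "\<dots> = 2 * s * (2 * r)" by simp
      finally have "2 * s * degree (coeff f b) < 2 * s * (2 * r)" .
      then have "degree (coeff f b) < 2 * r" by (simp only: mult_less_cancel1)
      then show "degree (coeff f b) \<le> 2 * r - 1" by simp
    qed
    have EG: "poly G (monom 1 r) = 1" unfolding G_def using Et n_def s0 by simp
    have Ef: "degree (poly f (monom 1 r)) = 0" if f: "f \<in> set fs" for f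
    proof (cases "poly f (monom 1 r) = 0")
      case True then show ?thesis by simp
    next
      case False
      have "poly G (monom 1 r) = sum_list (map (\<lambda>p. p^2) (map (\<lambda>f. poly f (monom 1 r) ^ s) fs))"
        unfolding fs(2) by (simp add: poly_sum_list_map o_def power_mult n_def mult.commute[of 2 s])
      then have e1: "sum_list (map (\<lambda>p. p^2) (map (\<lambda>f. poly f (monom 1 r) ^ s) fs)) = 1" using EG by simp
      have "poly f (monom 1 r) ^ s \<in> set (map (\<lambda>f. poly f (monom 1 r) ^ s) fs)" "poly f (monom 1 r) ^ s \<noteq> 0"
        using f False by auto
      from U[OF fr this] have "2 * degree (poly f (monom 1 r) ^ s) \<le> degree (sum_list (map (\<lambda>p. p^2) (map (\<lambda>f. poly f (monom 1 r) ^ s) fs)))"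
        using f by auto
      then have "2 * degree (poly f (monom 1 r) ^ s) \<le> 0" using e1 by simp
      then show ?thesis using degree_power_eq[OF False, of s] s0 by simp
    qed
    have "\<forall>i. \<exists>cp. i < l \<longrightarrow> dxle (snd cp) (r - 1) \<and> fs ! i = [:[:fst cp:]:] - t * snd cp"
    proof (intro allI)
      fix i
      show "\<exists>cp. i < l \<longrightarrow> dxle (snd cp) (r - 1) \<and> fs ! i = [:[:fst cp:]:] - t * snd cp"
      proof (cases "i < l")
        case True
        then have fi: "fs ! i \<in> set fs" using fs(1) by simp
        have "poly (fs ! i) (monom 1 r) = [:coeff (poly (fs ! i) (monom 1 r)) 0:]"
          using Ef[OF fi] by (metis degree_0_id)
        from claimB[OF df[OF fi] assms(6) this] show ?thesis unfolding t_def by auto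
      qed simp
    qed
    then obtain cp where cp: "\<And>i. i < l \<Longrightarrow> dxle (snd (cp i)) (r - 1) \<and> fs ! i = [:[:fst (cp i):]:] - t * snd (cp i)"
      by metis
    define c where "c i = fst (cp i)" for i
    define p where "p i = snd (cp i)" for i
    define C where "C i = [:[:c i:]:]" for i
    have dp: "dxle (p i) (r - 1)" and fsi: "fs ! i = C i - t * p i" if "i < l" for i
      using cp[OF that] unfolding c_def p_def C_def by auto
    define m where "m = n - 2"
    have nm: "n = m + 2" and m1: "m \<ge> 1" unfolding m_def n_def using assms(2) by auto
    obtain q where q: "q > 0" and Hq: "\<And>a b :: 'a poly poly. \<exists>R. (a+b)^(m+2) = a^(m+2) + of_nat (m+2) * a^(m+1) * b + of_nat q * a^m * b^2 + b^3 * R"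
      using expand[of m] by blast
    have "\<forall>i. \<exists>R. (C i - t * p i)^(m+2) = C i^(m+2) + of_nat (m+2) * C i^(m+1) * (-(t * p i)) + of_nat q * C i^m * (-(t * p i))^2 + (-(t * p i))^3 * R"
      using Hq by (metis diff_conv_add_uminus)
    then obtain R where R: "\<And>i. (C i - t * p i)^(m+2) = C i^(m+2) + of_nat (m+2) * C i^(m+1) * (-(t * p i)) + of_nat q * C i^m * (-(t * p i))^2 + (-(t * p i))^3 * R i"
      by metis
    define A0 where "A0 = (\<Sum>i<l. C i ^ n)"
    define S1 where "S1 = (\<Sum>i<l. C i ^ (m+1) * p i)"
    define S2 where "S2 = (\<Sum>i<l. C i ^ m * p i ^ 2)"
    define Rt where "Rt = (\<Sum>i<l. - (p i ^ 3 * R i))"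
    have trm: "(fs ! i) ^ n = C i ^ n - of_nat n * t * (C i ^ (m+1) * p i) + of_nat q * t^2 * (C i ^ m * p i ^ 2) + t^3 * (- (p i ^ 3 * R i))"
      if "i < l" for i
      unfolding fsi[OF that] nm R by (simp add: algebra_simps power2_eq_square power3_eq_cube)
    have Gsum: "G = (\<Sum>i<l. (fs ! i) ^ n)" unfolding fs(2) sum_list_map_nth fs(1) ..
    also have "\<dots> = (\<Sum>i<l. C i ^ n - of_nat n * t * (C i ^ (m+1) * p i) + of_nat q * t^2 * (C i ^ m * p i ^ 2) + t^3 * (- (p i ^ 3 * R i)))"
      using trm by (intro sum.cong) auto
    also have "\<dots> = A0 - of_nat n * t * S1 + of_nat q * t^2 * S2 + t^3 * Rt"
      unfolding A0_def S1_def S2_def Rt_def by (simp add: sum.distrib sum_subtractf sum_distrib_left sum_negf)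
    finally have Gexp: "G = A0 - of_nat n * t * S1 + of_nat q * t^2 * S2 + t^3 * Rt" .
    define a0 where "a0 = (\<Sum>i<l. c i ^ n)"
    have A0c: "A0 = [:[:a0:]:]" unfolding A0_def a0_def C_def by (simp add: poly_const_pow sum_const_poly)
    have "poly G (monom 1 r) = [:a0:]" unfolding Gexp using Et A0c by simp
    with EG have a01: "a0 = 1" by (metis one_pCons pCons_eq_iff)
    then have A01: "A0 = 1" using A0c by (simp add: one_pCons)
    have "t * (of_nat n * S1) = t * (t * (of_nat q * S2 + t * Rt - g * t ^ m))"
      using Gexp unfolding G_def A01 nm by (simp add: algebra_simps power2_eq_square power3_eq_cube)
    then have e1: "of_nat n * S1 = t * (of_nat q * S2 + t * Rt - g * t ^ m)" using t0 by simp
    have "of_nat n * poly S1 (monom 1 r) = 0"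
      using arg_cong[OF e1, of "\<lambda>h. poly h (monom 1 r)"] Et by simp
    moreover have "(of_nat n :: 'a poly) \<noteq> 0" using fr_of_nat[OF fr, of n] s0 n_def by (simp add: of_nat_poly)
    ultimately have ES1: "poly S1 (monom 1 r) = 0" by simp
    have "dxle S1 (r - 1)" unfolding S1_def
    proof (rule dxle_sum)
      fix i assume i: "i < l"
      have "dxle (C i ^ (m+1) * p i) ((m+1) * degree [:c i:] + (r - 1))"
        unfolding C_def by (rule dxle_mult[OF dxle_power[OF dxle_const] dp[OF i]])
      then show "dxle (C i ^ (m+1) * p i) (r - 1)" by simp
    qed
    from claimA[OF this assms(6) ES1] have S10: "S1 = 0" .
    obtain m' where m': "m = Suc m'" using m1 by (cases m) auto
    have "t * (of_nat q * S2) = t * (t * (g * t ^ m' - Rt))"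
      using e1 unfolding S10 m' by (simp add: algebra_simps)
    then have e2: "of_nat q * S2 = t * (g * t ^ m' - Rt)" using t0 by simp
    have "of_nat q * poly S2 (monom 1 r) = 0"
      using arg_cong[OF e2, of "\<lambda>h. poly h (monom 1 r)"] Et by simp
    moreover have "(of_nat q :: 'a poly) \<noteq> 0" using fr_of_nat[OF fr, of q] q by (simp add: of_nat_poly)
    ultimately have ES2: "poly S2 (monom 1 r) = 0" by simp
    have ms: "m = 2 * (s - 1)" unfolding m_def n_def using assms(2) by simp
    have "poly S2 (monom 1 r) = sum_list (map (\<lambda>x. x^2) (map (\<lambda>i. [:c i:] ^ (s - 1) * poly (p i) (monom 1 r)) [0..<l]))"
      unfolding S2_def C_def ms
      by (simp add: sum_list_map_nth o_def poly_sum power_mult_distrib flip: power_mult)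
         (simp add: mult.commute)
    with ES2 have ssq: "sum_list (map (\<lambda>x. x^2) (map (\<lambda>i. [:c i:] ^ (s - 1) * poly (p i) (monom 1 r)) [0..<l])) = 0"
      by simp
    have pz: "p i = 0" if "i < l" "c i \<noteq> 0" for i
    proof -
      have "[:c i:] ^ (s - 1) * poly (p i) (monom 1 r) = 0"
      proof (rule ccontr)
        assume nz: "[:c i:] ^ (s - 1) * poly (p i) (monom 1 r) \<noteq> 0"
        have "[:c i:] ^ (s - 1) * poly (p i) (monom 1 r) \<in> set (map (\<lambda>i. [:c i:] ^ (s - 1) * poly (p i) (monom 1 r)) [0..<l])"
          using that by auto
        from U[OF fr this nz] ssq show False by simp
      qed
      then have "poly (p i) (monom 1 r) = 0" using that by simp
      from claimA[OF dp[OF that(1)] assms(6) this] show ?thesis .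
    qed
    have term2: "(fs ! i) ^ n = C i ^ n + t ^ n * p i ^ n" if "i < l" for i
    proof (cases "c i = 0")
      case True
      then show ?thesis unfolding fsi[OF that] C_def n_def using s0 by (simp add: power_mult_distrib)
    next
      case False
      then show ?thesis unfolding fsi[OF that] using pz[OF that False] s0 n_def by simp
    qed
    define P where "P = (\<Sum>i<l. p i ^ n)"
    have "G = A0 + t ^ n * P" unfolding Gsum A0_def P_def
      using term2 by (simp add: sum.distrib sum_distrib_left)
    then have "t ^ n * g = t ^ n * P" unfolding A01 G_def by (simp add: mult.commute)
    then have gP: "g = P" using t0 by simp
    obtain j where j: "j < l" "c j \<noteq> 0"
    proof (rule ccontr)
      assume "\<not> thesis"
      then have "\<forall>i<l. c i = 0" using that by blast
      then have "a0 = 0" unfolding a0_def n_def using s0 by simp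
      with a01 show False by simp
    qed
    have pj: "p j = 0" using pz[OF j] .
    define I where "I = {..<l} - {j}"
    have "P = p j ^ n + (\<Sum>i\<in>I. p i ^ n)" unfolding P_def I_def
      using j(1) by (simp add: sum.remove)
    then have gI: "g = (\<Sum>i\<in>I. p i ^ n)" using gP pj n_def s0 by simp
    define xs where "xs = map p (sorted_list_of_set I)"
    have cI: "card I = l - 1" unfolding I_def using j(1) by simp
    have lxs: "length xs = l - 1" unfolding xs_def using cI by simp
    have "sum_list (map (\<lambda>x. x ^ n) xs) = (\<Sum>i\<in>I. p i ^ n)"
      unfolding xs_def I_def by (simp add: sum_list_distinct_conv_sum_set o_def)
    then have sp: "sum_of_powers n (l - 1) g" unfolding sum_of_powers_def using lxs gI by metis
    have "l - 1 > 0"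
    proof (rule ccontr)
      assume "\<not> l - 1 > 0"
      then have "I = {}" unfolding I_def using j(1) by auto
      with gI assms(3) show False by simp
    qed
    moreover have "l - 1 < k" using l(2) j(1) by linarith
    ultimately show False using minl sp by blast
  qed
  show ?thesis unfolding has_m_length_def
    using up low unfolding G_def t_def n_def by auto
qed


end
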